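(* Let $X$ be a complex Banach space, $0<\alpha<1$, $T>0$, and let $A$ satisfy Condition (A). Then for all $0\le t\le T$ and $a\in X$, $\lim_{t'\to t}\|G(t')a-G(t)a\|=0$, where $t'\to t$ means $t'\downarrow 0$ if $t=0$ and $t'\uparrow T$ if $t=T$.
   Context: Condition (A) on $A:\mathcal{D}(A)\subset X\to X$: (i) closed, densely defined; (ii) $\Sigma_{\vartheta}:=\{z\in\mathbb{C}\setminus\{0\}:|\arg z|<\vartheta\}\subset\rho(A)$ for some $\vartheta\in(\pi/2,\pi)$; (iii) for every $\epsilon\in(0,\vartheta)$, $\|(\lambda-A)^{-1}\|\le C_\epsilon/|\lambda|$ for $\lambda\in\Sigma_{\vartheta-\epsilon}$; (iv) $0\in\rho(A)$. For $t>0$, $G(t)a:=\frac{1}{2\pi i}\int_{\Gamma}e^{\lambda t}\lambda^{\alpha-1}(\lambda^{\alpha}-A)^{-1}a\,d\lambda$ (principal branches), $\Gamma=\{\rho e^{-i\vartheta}:\rho>1/t\}\cup\{t^{-1}e^{i\theta}:|\theta|\le\vartheta\}\cup\{\rho e^{i\vartheta}:\rho>1/t\}$ oriented from $\infty e^{-i\vartheta}$ to $\infty e^{i\vartheta}$; and $G(0)a:=a$. *)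

theory Defs
  imports "HOL-Analysis.Analysis"
begin

text \<open>A complex Banach space is modelled as a real Banach space of type 'a together with
  a scalar multiplication by complex numbers that extends the real one and is compatible
  with the norm.\<close>

definition complex_scaling :: "(complex \<Rightarrow> 'a::banach \<Rightarrow> 'a) \<Rightarrow> bool" where
  "complex_scaling sc \<longleftrightarrow>
     (\<forall>r x. sc (complex_of_real r) x = r *\<^sub>R x) \<and>
     (\<forall>c x y. sc c (x + y) = sc c x + sc c y) \<and>
     (\<forall>c d x. sc (c + d) x = sc c x + sc d x) \<and>
     (\<forall>c d x. sc c (sc d x) = sc (c * d) x) \<and>
     (\<forall>c x. norm (sc c x) = cmod c * norm x)"

definition lin_op :: "(complex \<Rightarrow> 'a::banach \<Rightarrow> 'a) \<Rightarrow> 'a set \<Rightarrow> ('a \<Rightarrow> 'a) \<Rightarrow> bool" where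
  "lin_op sc D A \<longleftrightarrow>
     0 \<in> D \<and> (\<forall>x\<in>D. \<forall>y\<in>D. x + y \<in> D) \<and> (\<forall>c. \<forall>x\<in>D. sc c x \<in> D) \<and>
     (\<forall>x\<in>D. \<forall>y\<in>D. A (x + y) = A x + A y) \<and> (\<forall>c. \<forall>x\<in>D. A (sc c x) = sc c (A x))"

definition closed_op :: "'a set \<Rightarrow> ('a::banach \<Rightarrow> 'a) \<Rightarrow> bool" where
  "closed_op D A \<longleftrightarrow> closed {(x, A x) | x. x \<in> D}"

definition densely_defined :: "'a::banach set \<Rightarrow> bool" where
  "densely_defined D \<longleftrightarrow> closure D = UNIV"

definition resolvent :: "(complex \<Rightarrow> 'a::banach \<Rightarrow> 'a) \<Rightarrow> 'a set \<Rightarrow> ('a \<Rightarrow> 'a) \<Rightarrow> complex \<Rightarrow> 'a \<Rightarrow> 'a" where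
  "resolvent sc D A l y = (THE x. x \<in> D \<and> sc l x - A x = y)"

definition in_resolvent_set :: "(complex \<Rightarrow> 'a::banach \<Rightarrow> 'a) \<Rightarrow> 'a set \<Rightarrow> ('a \<Rightarrow> 'a) \<Rightarrow> complex \<Rightarrow> bool" where
  "in_resolvent_set sc D A l \<longleftrightarrow>
     (\<forall>y. \<exists>!x. x \<in> D \<and> sc l x - A x = y) \<and>
     (\<exists>C. \<forall>y. norm (resolvent sc D A l y) \<le> C * norm y)"

definition sector :: "real \<Rightarrow> complex set" where
  "sector th = {z. z \<noteq> 0 \<and> \<bar>Arg z\<bar> < th}"

definition condition_A :: "(complex \<Rightarrow> 'a::banach \<Rightarrow> 'a) \<Rightarrow> 'a set \<Rightarrow> ('a \<Rightarrow> 'a) \<Rightarrow> real \<Rightarrow> bool" where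
  "condition_A sc D A th \<longleftrightarrow>
     lin_op sc D A \<and> closed_op D A \<and> densely_defined D \<and>
     pi / 2 < th \<and> th < pi \<and>
     (\<forall>l \<in> sector th. in_resolvent_set sc D A l) \<and>
     (\<forall>e. 0 < e \<and> e < th \<longrightarrow>
        (\<exists>C. \<forall>l \<in> sector (th - e). \<forall>y.
            norm (resolvent sc D A l y) \<le> C / cmod l * norm y)) \<and>
     in_resolvent_set sc D A 0"

definition G_integrand ::
  "(complex \<Rightarrow> 'a::banach \<Rightarrow> 'a) \<Rightarrow> 'a set \<Rightarrow> ('a \<Rightarrow> 'a) \<Rightarrow> real \<Rightarrow> real \<Rightarrow> 'a \<Rightarrow> complex \<Rightarrow> 'a" where
  "G_integrand sc D A al t a l =
     sc (exp (l * complex_of_real t) * l powr (complex_of_real al - 1))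
        (resolvent sc D A (l powr complex_of_real al) a)"

text \<open>G(t)a as the contour integral over Gamma, written out through the parametrisations
  of its three pieces: the ray rho e^(-i th), rho > 1/t (traversed inward), the arc
  t^(-1) e^(i s), |s| \<le> th, and the ray rho e^(i th), rho > 1/t (traversed outward).\<close>

definition G_op ::
  "(complex \<Rightarrow> 'a::banach \<Rightarrow> 'a) \<Rightarrow> 'a set \<Rightarrow> ('a \<Rightarrow> 'a) \<Rightarrow> real \<Rightarrow> real \<Rightarrow> real \<Rightarrow> 'a \<Rightarrow> 'a" where
  "G_op sc D A al th t a =
    (if t = 0 then a else
     sc (1 / (2 * complex_of_real pi * \<i>))
       ( - integral {1/t..} (\<lambda>r. sc (cis (- th))
              (G_integrand sc D A al t a (complex_of_real r * cis (- th))))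
         + integral {-th..th} (\<lambda>s. sc (\<i> * complex_of_real (1/t) * cis s)
              (G_integrand sc D A al t a (complex_of_real (1/t) * cis s)))
         + integral {1/t..} (\<lambda>r. sc (cis th)
              (G_integrand sc D A al t a (complex_of_real r * cis th)))))"

end

theory Submission
  imports Defs "HOL-Complex_Analysis.Complex_Analysis" "HOL-Real_Asymp.Real_Asymp"
begin



lemma cs_bb:
  fixes sc :: "complex \<Rightarrow> 'a::banach \<Rightarrow> 'a"
  assumes "complex_scaling sc"
  shows "bounded_bilinear sc"
proof -
  have r: "\<And>r x. sc (complex_of_real r) x = r *\<^sub>R x"
   and ar: "\<And>c x y. sc c (x + y) = sc c x + sc c y"
   and al: "\<And>c d x. sc (c + d) x = sc c x + sc d x"
   and m: "\<And>c d x. sc c (sc d x) = sc (c * d) x"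
   and n: "\<And>c x. norm (sc c x) = cmod c * norm x"
    using assms unfolding complex_scaling_def by auto
  show ?thesis
  proof
    show "sc (a + a') b = sc a b + sc a' b" for a a' b by (rule al)
    show "sc a (b + b') = sc a b + sc a b'" for a b b' by (rule ar)
    show "sc (r *\<^sub>R a) b = r *\<^sub>R sc a b" for r a b
      by (metis m r scaleR_conv_of_real)
    show "sc a (r *\<^sub>R b) = r *\<^sub>R sc a b" for r a b
      by (metis m r mult.commute scaleR_conv_of_real)
    show "\<exists>K. \<forall>a b. norm (sc a b) \<le> norm a * norm b * K"
      by (rule exI[of _ 1]) (simp add: n)
  qed
qed

definition GamS :: "real \<Rightarrow> complex set" where
 "GamS th = (\<lambda>r. complex_of_real r * cis th) ` {1..} \<union>
   (\<lambda>r. complex_of_real r * cis (-th)) ` {1..} \<union> cis ` {-th..th}"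

locale setting =
  fixes sc :: "complex \<Rightarrow> 'a::banach \<Rightarrow> 'a" and D :: "'a set" and A :: "'a \<Rightarrow> 'a"
    and al th :: real
  assumes cs: "complex_scaling sc" and al0: "0 < al" and al1: "al < 1"
    and cA: "condition_A sc D A th"
begin

lemma bb: "bounded_bilinear sc" using cs by (rule cs_bb)

lemma sc_of_real: "sc (complex_of_real r) x = r *\<^sub>R x"
  and sc_mult: "sc c (sc d x) = sc (c * d) x"
  and sc_norm: "norm (sc c x) = cmod c * norm x"
  using cs unfolding complex_scaling_def by auto

lemma sc_one: "sc 1 x = x" using sc_of_real[of 1 x] by simp

lemmas sc_add_right = bounded_bilinear.add_right[OF bb]
lemmas sc_add_left = bounded_bilinear.add_left[OF bb]
lemmas sc_diff_right = bounded_bilinear.diff_right[OF bb]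
lemmas sc_diff_left = bounded_bilinear.diff_left[OF bb]
lemmas sc_minus_right = bounded_bilinear.minus_right[OF bb]
lemmas sc_minus_left = bounded_bilinear.minus_left[OF bb]
lemmas sc_zero_right = bounded_bilinear.zero_right[OF bb]
lemmas sc_zero_left = bounded_bilinear.zero_left[OF bb]

lemma linop: "lin_op sc D A" and th_gt: "pi / 2 < th" and th_lt: "th < pi"
  and res_sector: "\<And>l. l \<in> sector th \<Longrightarrow> in_resolvent_set sc D A l"
  and res_bound: "\<And>e. 0 < e \<Longrightarrow> e < th \<Longrightarrow> \<exists>C. \<forall>l \<in> sector (th - e). \<forall>y.
            norm (resolvent sc D A l y) \<le> C / cmod l * norm y"
  and res0: "in_resolvent_set sc D A 0"
  and dense: "densely_defined D"
  using cA unfolding condition_A_def by auto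

lemma th_pos: "0 < th" using th_gt pi_gt_zero by linarith

lemma D0: "0 \<in> D" and Dadd: "x \<in> D \<Longrightarrow> y \<in> D \<Longrightarrow> x + y \<in> D"
  and Dsc: "x \<in> D \<Longrightarrow> sc c x \<in> D"
  and Aadd: "x \<in> D \<Longrightarrow> y \<in> D \<Longrightarrow> A (x + y) = A x + A y"
  and Asc: "x \<in> D \<Longrightarrow> A (sc c x) = sc c (A x)"
  using linop unfolding lin_op_def by auto

abbreviation "R \<equiv> resolvent sc D A"

lemma res_eq:
  assumes "in_resolvent_set sc D A l"
  shows "R l y \<in> D \<and> sc l (R l y) - A (R l y) = y"
proof -
  have "\<exists>!x. x \<in> D \<and> sc l x - A x = y" using assms unfolding in_resolvent_set_def by auto
  then show ?thesis unfolding resolvent_def by (rule theI')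
qed

lemma res_uniq:
  assumes "in_resolvent_set sc D A l" "x \<in> D" "sc l x - A x = y"
  shows "R l y = x"
proof -
  have "\<exists>!x. x \<in> D \<and> sc l x - A x = y" using assms unfolding in_resolvent_set_def by auto
  then show ?thesis unfolding resolvent_def using assms by (intro the1_equality) auto
qed

lemma res_add:
  assumes l: "in_resolvent_set sc D A l"
  shows "R l (y + z) = R l y + R l z"
proof (rule res_uniq[OF l])
  show "R l y + R l z \<in> D" using res_eq[OF l] Dadd by blast
  show "sc l (R l y + R l z) - A (R l y + R l z) = y + z"
    using res_eq[OF l, of y] res_eq[OF l, of z]
    by (simp add: Aadd sc_add_right algebra_simps)
qed

lemma res_diff:
  assumes l: "in_resolvent_set sc D A l"
  shows "R l (y - z) = R l y - R l z"
  using res_add[OF l, of "y - z" z] by simp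

lemma res_sc:
  assumes l: "in_resolvent_set sc D A l"
  shows "R l (sc c y) = sc c (R l y)"
proof (rule res_uniq[OF l])
  show "sc c (R l y) \<in> D" using res_eq[OF l] Dsc by blast
  have "sc l (sc c (R l y)) = sc c (sc l (R l y))" by (simp add: sc_mult mult.commute)
  then show "sc l (sc c (R l y)) - A (sc c (R l y)) = sc c y"
    using res_eq[OF l, of y] by (simp add: Asc sc_diff_right[symmetric])
qed

lemma res_identity:
  assumes l: "in_resolvent_set sc D A l" and m: "in_resolvent_set sc D A m"
  shows "R l y - R m y = sc (m - l) (R l (R m y))"
proof -
  define x where "x = R m y"
  have xD: "x \<in> D" and xe: "sc m x - A x = y" using res_eq[OF m, of y] by (auto simp: x_def)
  have "sc l x - A x = y + sc (l - m) x"
    using xe by (simp add: sc_diff_left algebra_simps)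
  then have "R l (y + sc (l - m) x) = x" by (intro res_uniq[OF l xD]) simp
  then have "R l y + sc (l - m) (R l x) = x" by (simp add: res_add[OF l] res_sc[OF l])
  then show ?thesis unfolding x_def[symmetric]
    by (metis add_diff_cancel_left' minus_diff_eq sc_minus_left diff_minus_eq_add)
qed

lemma res_AD:
  assumes l: "in_resolvent_set sc D A l" and d: "d \<in> D"
  shows "sc l (R l d) - d = R l (A d)"
proof -
  have "R l (sc l d - A d) = d" by (rule res_uniq[OF l d]) simp
  then have "sc l (R l d) - R l (A d) = d" by (simp add: res_diff[OF l] res_sc[OF l])
  then show ?thesis by (metis diff_eq_eq add.commute)
qed


definition "e0 = th * (1 - al) / 2"
abbreviation "Sig \<equiv> sector (th - e0)"

lemma e0_pos: "0 < e0" and e0_lt: "e0 < th"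
  using th_pos al0 al1 unfolding e0_def by (auto simp: field_simps intro: add_pos_pos mult_pos_pos)

lemma Sig_sub: "Sig \<subseteq> sector th"
  using e0_pos unfolding sector_def by auto

lemma Sig_res: "l \<in> Sig \<Longrightarrow> in_resolvent_set sc D A l"
  using Sig_sub res_sector by blast

definition "Cb = (SOME C. \<forall>l \<in> Sig. \<forall>y. norm (R l y) \<le> C / cmod l * norm y)"
definition "CC = max 0 Cb"

lemma CC_nonneg: "0 \<le> CC" unfolding CC_def by simp

lemma Rb: assumes "l \<in> Sig" shows "norm (R l y) \<le> CC / cmod l * norm y"
proof -
  have "\<forall>l \<in> Sig. \<forall>y. norm (R l y) \<le> Cb / cmod l * norm y"
    unfolding Cb_def using res_bound[OF e0_pos e0_lt] by (rule someI_ex)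
  then have "norm (R l y) \<le> Cb / cmod l * norm y" using assms by blast
  also have "\<dots> \<le> CC / cmod l * norm y"
    unfolding CC_def by (intro mult_right_mono divide_right_mono) auto
  finally show ?thesis .
qed

lemma powr_sector:
  fixes \<mu> :: complex
  assumes mu: "\<mu> \<noteq> 0" "\<bar>Arg \<mu>\<bar> \<le> th" and s: "0 < s"
  shows "complex_of_real s * \<mu> powr complex_of_real al \<in> Sig"
    and "cmod (complex_of_real s * \<mu> powr complex_of_real al) = s * cmod \<mu> powr al"
proof -
  have eq: "complex_of_real s * \<mu> powr complex_of_real al
      = exp (complex_of_real (ln s) + complex_of_real al * Ln \<mu>)"
    using mu s by (simp add: powr_def exp_add exp_of_real)
  have im: "Im (complex_of_real (ln s) + complex_of_real al * Ln \<mu>) = al * Arg \<mu>"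
    using mu by (simp add: Arg_eq_Im_Ln)
  have b: "\<bar>al * Arg \<mu>\<bar> \<le> al * th"
    using mu al0 by (simp add: abs_mult mult_left_mono)
  have c: "al * th < th - e0" using al0 al1 th_pos unfolding e0_def
    by (simp add: field_simps)
  have d: "th - e0 \<le> pi" using e0_pos th_lt by simp
  have "Arg (complex_of_real s * \<mu> powr complex_of_real al) = al * Arg \<mu>"
    unfolding eq using b c d im by (subst Arg_exp) auto
  then show "complex_of_real s * \<mu> powr complex_of_real al \<in> Sig"
    unfolding sector_def using b c mu s by (auto simp: powr_def)
  show "cmod (complex_of_real s * \<mu> powr complex_of_real al) = s * cmod \<mu> powr al"
    using s by (simp add: norm_mult norm_powr_real_powr')
qed


abbreviation "Gam \<equiv> GamS th"

lemma Gam_props: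
  assumes "z \<in> Gam"
  shows "z \<noteq> 0" "1 \<le> cmod z" "\<bar>Arg z\<bar> \<le> th" "Re z \<ge> 0 \<or> Im z \<noteq> 0"
proof -
  have thp: "-pi < th" "th \<le> pi" "-pi < -th" "-th \<le> pi" using th_pos th_lt by auto
  have sinth: "sin th > 0" using th_pos th_lt by (intro sin_gt_zero) auto
  consider (p) r where "r \<ge> 1" "z = complex_of_real r * cis th"
    | (m) r where "r \<ge> 1" "z = complex_of_real r * cis (-th)"
    | (c) s where "-th \<le> s" "s \<le> th" "z = cis s"
    using assms unfolding GamS_def by auto
  then have "z \<noteq> 0 \<and> 1 \<le> cmod z \<and> \<bar>Arg z\<bar> \<le> th \<and> (Re z \<ge> 0 \<or> Im z \<noteq> 0)"
  proof cases
    case p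
    have "Arg z = th" using p thp by (intro Arg_unique'[of r]) (auto simp: rcis_def)
    then show ?thesis using p sinth th_pos by (auto simp: norm_mult)
  next
    case m
    have "Arg z = -th" using m thp by (intro Arg_unique'[of r]) (auto simp: rcis_def)
    then show ?thesis using m sinth th_pos by (auto simp: norm_mult)
  next
    case c
    have "Arg z = s" unfolding c(3) by (rule Arg_cis) (use c thp in auto)
    moreover have "Im z = 0 \<Longrightarrow> Re z \<ge> 0"
    proof -
      assume "Im z = 0"
      then have "sin s = 0" using c by simp
      moreover have "\<bar>s\<bar> < pi" using c th_lt by auto
      ultimately have "s = 0" using sin_zero_pi_iff by blast
      then show "Re z \<ge> 0" using c by simp
    qed
    ultimately show ?thesis using c by auto
  qed
  then show "z \<noteq> 0" "1 \<le> cmod z" "\<bar>Arg z\<bar> \<le> th" "Re z \<ge> 0 \<or> Im z \<noteq> 0" by auto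
qed

definition "Fs s a \<mu> = sc (exp \<mu> * \<mu> powr (complex_of_real al - 1) * complex_of_real s)
     (R (complex_of_real s * \<mu> powr complex_of_real al) a)"

lemma norm_mu_powr:
  assumes "\<mu> \<noteq> 0"
  shows "cmod (\<mu> powr (complex_of_real al - 1)) = cmod \<mu> powr al / cmod \<mu>"
proof -
  have "complex_of_real al - 1 = complex_of_real (al - 1)" by simp
  then have "cmod (\<mu> powr (complex_of_real al - 1)) = cmod \<mu> powr (al - 1)"
    by (simp add: norm_powr_real_powr' del: of_real_diff)
  also have "\<dots> = cmod \<mu> powr al / cmod \<mu>" using assms by (simp add: powr_diff)
  finally show ?thesis .
qed

lemma Fs_bound:
  assumes mu: "\<mu> \<in> Gam" and s: "0 < s"
  shows "norm (Fs s a \<mu>) \<le> CC * exp (Re \<mu>) * norm a"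
proof -
  note g = Gam_props[OF mu]
  define m where "m = cmod \<mu>"
  have m1: "1 \<le> m" using g m_def by simp
  have mp: "0 < m powr al" using m1 by simp
  have nu: "complex_of_real s * \<mu> powr complex_of_real al \<in> Sig"
    and nn: "cmod (complex_of_real s * \<mu> powr complex_of_real al) = s * m powr al"
    using powr_sector[OF g(1) g(3) s] m_def by auto
  have "norm (Fs s a \<mu>) = exp (Re \<mu>) * (m powr al / m) * s *
      norm (R (complex_of_real s * \<mu> powr complex_of_real al) a)"
    unfolding Fs_def using s g by (simp add: sc_norm norm_mult norm_mu_powr m_def)
  also have "\<dots> \<le> exp (Re \<mu>) * (m powr al / m) * s * (CC / (s * m powr al) * norm a)"
    using Rb[OF nu, of a] nn m1 s by (intro mult_left_mono) auto
  also have "\<dots> = CC * exp (Re \<mu>) * norm a / m" using s mp m1 by (simp add: field_simps)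
  also have "\<dots> \<le> CC * exp (Re \<mu>) * norm a / 1" using m1 CC_nonneg
    by (intro divide_left_mono) auto
  finally show ?thesis by simp
qed


lemma mu_powr_eq: assumes "\<mu> \<noteq> 0"
  shows "\<mu> powr (complex_of_real al - 1) = \<mu> powr complex_of_real al / \<mu>"
  using assms by (simp add: powr_def left_diff_distrib exp_diff)

lemma Fs_nu:
  assumes mu: "\<mu> \<in> Gam" and s: "0 < s"
  shows "complex_of_real s * \<mu> powr complex_of_real al \<in> Sig"
    and "cmod (complex_of_real s * \<mu> powr complex_of_real al) = s * cmod \<mu> powr al"
  using powr_sector[OF Gam_props(1,3)[OF mu] s] by auto

lemma Fs_diff_a:
  assumes mu: "\<mu> \<in> Gam" and s: "0 < s"
  shows "Fs s a \<mu> - Fs s b \<mu> = Fs s (a - b) \<mu>"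
  unfolding Fs_def using res_diff[OF Sig_res[OF Fs_nu(1)[OF mu s]]]
  by (simp add: sc_diff_right)

lemma Fs_lip:
  assumes mu: "\<mu> \<in> Gam" and s: "0 < s" and s': "0 < s'"
  shows "norm (Fs s a \<mu> - Fs s' a \<mu>) \<le> exp (Re \<mu>) * (\<bar>s - s'\<bar> * ((CC + CC^2) * norm a) / s)"
proof -
  note g = Gam_props[OF mu]
  define m where "m = cmod \<mu>"
  define p where "p = m powr al"
  define \<nu> where "\<nu> = \<mu> powr complex_of_real al"
  define c where "c = exp \<mu> * \<mu> powr (complex_of_real al - 1)"
  have m1: "1 \<le> m" using g m_def by simp
  have p1: "1 \<le> p" using m1 al0 unfolding p_def by (simp add: ge_one_powr_ge_zero)
  have n1: "complex_of_real s * \<nu> \<in> Sig" "cmod (complex_of_real s * \<nu>) = s * p"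
    using Fs_nu[OF mu s] unfolding \<nu>_def p_def m_def by auto
  have n2: "complex_of_real s' * \<nu> \<in> Sig" "cmod (complex_of_real s' * \<nu>) = s' * p"
    using Fs_nu[OF mu s'] unfolding \<nu>_def p_def m_def by auto
  have cnu: "cmod \<nu> = p" unfolding \<nu>_def p_def m_def by (simp add: norm_powr_real_powr')
  define r1 where "r1 = R (complex_of_real s * \<nu>) a"
  define r2 where "r2 = R (complex_of_real s' * \<nu>) a"
  have Fe: "Fs s a \<mu> - Fs s' a \<mu> = sc c (sc (complex_of_real s) r1 - sc (complex_of_real s') r2)"
    unfolding Fs_def c_def r1_def r2_def \<nu>_def by (simp add: sc_mult sc_diff_right)
  have "r1 - r2 = sc (complex_of_real s' * \<nu> - complex_of_real s * \<nu>)
       (R (complex_of_real s * \<nu>) r2)"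
    unfolding r1_def r2_def by (rule res_identity[OF Sig_res[OF n1(1)] Sig_res[OF n2(1)]])
  then have X: "sc (complex_of_real s) r1 - sc (complex_of_real s') r2 =
      sc (complex_of_real (s - s')) r1 + sc (complex_of_real s') (sc (complex_of_real s' * \<nu> - complex_of_real s * \<nu>)
       (R (complex_of_real s * \<nu>) r2))"
  proof -
    have "sc (complex_of_real s) r1 - sc (complex_of_real s') r2 = sc (complex_of_real (s - s')) r1 + sc (complex_of_real s') (r1 - r2)"
      by (simp add: sc_diff_left sc_diff_right)
    then show ?thesis using \<open>r1 - r2 = _\<close> by simp
  qed
  have br1: "norm r1 \<le> CC / (s * p) * norm a" using Rb[OF n1(1), of a] n1(2) r1_def by simp
  have br2: "norm r2 \<le> CC / (s' * p) * norm a" using Rb[OF n2(1), of a] n2(2) r2_def by simp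
  have br12: "norm (R (complex_of_real s * \<nu>) r2) \<le> CC / (s * p) * (CC / (s' * p) * norm a)"
    using Rb[OF n1(1), of r2] n1(2) br2 CC_nonneg s p1
    by (smt (verit) divide_nonneg_pos mult_left_mono mult_pos_pos)
  have t1: "norm (sc (complex_of_real (s - s')) r1) \<le> \<bar>s - s'\<bar> * (CC / (s * p) * norm a)"
  proof -
    have "norm (sc (complex_of_real (s - s')) r1) = \<bar>s - s'\<bar> * norm r1" by (simp only: sc_norm norm_of_real)
    then show ?thesis using mult_left_mono[OF br1 abs_ge_zero[of "s - s'"]] by linarith
  qed
  have cd: "cmod (complex_of_real s' * \<nu> - complex_of_real s * \<nu>) = \<bar>s - s'\<bar> * p"
    by (simp add: cnu left_diff_distrib[symmetric] norm_mult abs_minus_commute flip: of_real_diff)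
  have t2: "norm (sc (complex_of_real s') (sc (complex_of_real s' * \<nu> - complex_of_real s * \<nu>)
       (R (complex_of_real s * \<nu>) r2))) \<le> s' * (\<bar>s - s'\<bar> * p) * (CC / (s * p) * (CC / (s' * p) * norm a))"
  proof -
    have "norm (sc (complex_of_real s') (sc (complex_of_real s' * \<nu> - complex_of_real s * \<nu>)
       (R (complex_of_real s * \<nu>) r2))) = s' * (\<bar>s - s'\<bar> * p) * norm (R (complex_of_real s * \<nu>) r2)"
      using s' by (simp only: sc_norm cd norm_of_real mult.assoc abs_of_pos)
    moreover have "0 \<le> s' * (\<bar>s - s'\<bar> * p)" using s' p1 by simp
    ultimately show ?thesis using br12 by (metis mult_left_mono)
  qed
  have e2: "s' * (\<bar>s - s'\<bar> * p) * (CC / (s * p) * (CC / (s' * p) * norm a)) = \<bar>s - s'\<bar> * (CC^2 * norm a) / (s * p)"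
    using s s' p1 by (simp add: field_simps power2_eq_square)
  have e1: "\<bar>s - s'\<bar> * (CC / (s * p) * norm a) = \<bar>s - s'\<bar> * (CC * norm a) / (s * p)" by simp
  have "norm (sc (complex_of_real s) r1 - sc (complex_of_real s') r2) \<le> \<bar>s - s'\<bar> * ((CC + CC^2) * norm a) / (s * p)"
    unfolding X using norm_triangle_le[OF add_mono[OF t1 t2]] e1 e2
    by (simp add: add_divide_distrib distrib_left distrib_right)
  moreover have cc: "cmod c = exp (Re \<mu>) * (p / m)"
    unfolding c_def p_def m_def using g by (simp add: norm_mult norm_mu_powr)
  ultimately have "norm (Fs s a \<mu> - Fs s' a \<mu>) \<le> exp (Re \<mu>) * (p / m) * (\<bar>s - s'\<bar> * ((CC + CC^2) * norm a) / (s * p))"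
    unfolding Fe sc_norm cc[symmetric] by (intro mult_left_mono) auto
  also have "\<dots> = exp (Re \<mu>) * (\<bar>s - s'\<bar> * ((CC + CC^2) * norm a) / s) / m"
    using p1 m1 s by (simp add: field_simps)
  also have "\<dots> \<le> exp (Re \<mu>) * (\<bar>s - s'\<bar> * ((CC + CC^2) * norm a) / s) / 1"
    using m1 s CC_nonneg by (intro divide_left_mono) auto
  finally show ?thesis by simp
qed

lemma Fs_D:
  assumes mu: "\<mu> \<in> Gam" and s: "0 < s" and d: "d \<in> D"
  shows "norm (Fs s d \<mu> - sc (exp \<mu> / \<mu>) d) \<le> exp (Re \<mu>) * (CC * norm (A d) / s)"
proof -
  note g = Gam_props[OF mu]
  define m where "m = cmod \<mu>"
  define p where "p = m powr al"
  define \<nu> where "\<nu> = complex_of_real s * \<mu> powr complex_of_real al"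
  have m1: "1 \<le> m" using g m_def by simp
  have p1: "1 \<le> p" using m1 al0 unfolding p_def by (simp add: ge_one_powr_ge_zero)
  have n1: "\<nu> \<in> Sig" "cmod \<nu> = s * p"
    using Fs_nu[OF mu s] unfolding \<nu>_def p_def m_def by auto
  have "exp \<mu> * \<mu> powr (complex_of_real al - 1) * complex_of_real s = (exp \<mu> / \<mu>) * \<nu>"
    unfolding \<nu>_def using g by (simp add: mu_powr_eq)
  then have "Fs s d \<mu> - sc (exp \<mu> / \<mu>) d = sc (exp \<mu> / \<mu>) (sc \<nu> (R \<nu> d) - d)"
    unfolding Fs_def \<nu>_def[symmetric] by (simp add: sc_mult sc_diff_right)
  also have "\<dots> = sc (exp \<mu> / \<mu>) (R \<nu> (A d))" using res_AD[OF Sig_res[OF n1(1)] d] by simp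
  finally have e: "Fs s d \<mu> - sc (exp \<mu> / \<mu>) d = sc (exp \<mu> / \<mu>) (R \<nu> (A d))" .
  have bR: "norm (R \<nu> (A d)) \<le> CC / (s * p) * norm (A d)" using Rb[OF n1(1)] n1(2) by simp
  have eqn: "norm (Fs s d \<mu> - sc (exp \<mu> / \<mu>) d) = (exp (Re \<mu>) / m) * norm (R \<nu> (A d))"
    unfolding e sc_norm using m_def by (simp add: norm_divide)
  have "norm (Fs s d \<mu> - sc (exp \<mu> / \<mu>) d) \<le> (exp (Re \<mu>) / m) * (CC / (s * p) * norm (A d))"
  proof -
    have "0 \<le> exp (Re \<mu>) / m" using m1 by simp
    then show ?thesis using bR eqn by (metis mult_left_mono)
  qed
  also have "\<dots> = exp (Re \<mu>) * (CC * norm (A d) / s) / (m * p)" by (simp add: field_simps)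
  also have "\<dots> \<le> exp (Re \<mu>) * (CC * norm (A d) / s) / 1"
    using m1 p1 s CC_nonneg by (intro divide_left_mono) (auto intro: order_trans[OF _ mult_mono[of 1 m 1 p]])
  finally show ?thesis by simp
qed

end



lemma ray_int:
  fixes f :: "real \<Rightarrow> 'b::banach"
  assumes cf: "continuous_on {a..} f" and c: "0 < c"
    and bd: "\<And>x. a \<le> x \<Longrightarrow> norm (f x) \<le> B * exp (- c * x)"
  shows "f integrable_on {a..}" "norm (integral {a..} f) \<le> B * exp (- c * a) / c"
proof -
  have gi: "((\<lambda>x. B * exp (- c * x)) has_integral (B * (exp (- c * a) / c))) {a..}"
    by (intro has_integral_mult_right has_integral_exp_minus_to_infinity c)
  show fi: "f integrable_on {a..}"
  proof (rule integrable_on_all_intervals_integrable_bound[where g="\<lambda>x. B * exp (- c * x)"])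
    fix u v :: real
    have "{a..} \<inter> cbox u v = {max a u..v}" by auto
    moreover have "f integrable_on {max a u..v}"
      by (rule integrable_continuous_interval) (rule continuous_on_subset[OF cf], auto)
    ultimately show "(\<lambda>x. if x \<in> {a..} then f x else 0) integrable_on cbox u v"
      by (simp only: integrable_restrict_Int)
  next
    show "norm (f x) \<le> B * exp (- c * x)" if "x \<in> {a..}" for x using bd that by auto
    show "(\<lambda>x. B * exp (- c * x)) integrable_on {a..}" using gi by blast
  qed
  have "norm (integral {a..} f) \<le> integral {a..} (\<lambda>x. B * exp (- c * x))"
    using gi fi bd by (intro integral_norm_bound_integral) auto
  also have "\<dots> = B * exp (- c * a) / c" using integral_unique[OF gi] by simp
  finally show "norm (integral {a..} f) \<le> B * exp (- c * a) / c" .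
qed

lemma ray_lim:
  fixes f :: "real \<Rightarrow> 'b::banach"
  assumes cf: "continuous_on {a..} f" and c: "0 < c"
    and bd: "\<And>x. a \<le> x \<Longrightarrow> norm (f x) \<le> B * exp (- c * x)"
  shows "((\<lambda>b. integral {a..b} f) \<longlongrightarrow> integral {a..} f) at_top"
proof -
  have split: "integral {a..} f - integral {a..b} f = integral {b..} f" if b: "a \<le> b" for b
  proof -
    have i1: "(f has_integral integral {a..b} f) {a..b}"
      by (intro integrable_integral integrable_continuous_interval continuous_on_subset[OF cf]) auto
    have "f integrable_on {b..}"
      by (rule ray_int(1)[OF continuous_on_subset[OF cf] c, of b B]) (use bd b in auto)
    then have i2: "(f has_integral integral {b..} f) {b..}" by (rule integrable_integral)
    have "(f has_integral (integral {a..b} f + integral {b..} f)) ({a..b} \<union> {b..})"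
      by (rule has_integral_Un[OF i1 i2]) (use b in \<open>auto intro: negligible_subset[of "{b}"]\<close>)
    moreover have "{a..b} \<union> {b..} = {a..}" using b by auto
    ultimately show ?thesis by (simp add: integral_unique)
  qed
  have "((\<lambda>b. integral {a..} f - integral {a..b} f) \<longlongrightarrow> 0) at_top"
  proof (rule Lim_null_comparison)
    show "\<forall>\<^sub>F b in at_top. norm (integral {a..} f - integral {a..b} f) \<le> B * exp (- c * b) / c"
      using eventually_ge_at_top[of a]
    proof eventually_elim
      case (elim b)
      show ?case unfolding split[OF elim]
        using ray_int(2)[OF continuous_on_subset[OF cf] c, of b] bd elim by auto
    qed
    show "((\<lambda>b. B * exp (- c * b) / c) \<longlongrightarrow> 0) at_top" using c by real_asymp
  qed
  then have "((\<lambda>b. integral {a..} f - (integral {a..} f - integral {a..b} f)) \<longlongrightarrow> integral {a..} f - 0) at_top"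
    by (intro tendsto_diff tendsto_const)
  then show ?thesis by simp
qed

lemma ray_subst:
  fixes f :: "real \<Rightarrow> 'b::banach"
  assumes cf: "continuous_on {a..} f" and c: "0 < c" and m: "0 < m"
    and bd: "\<And>x. a \<le> x \<Longrightarrow> norm (f x) \<le> B * exp (- c * x)"
  shows "integral {a..} f = integral {a/m..} (\<lambda>x. m *\<^sub>R f (m * x))"
proof -
  define g where "g = (\<lambda>x. m *\<^sub>R f (m * x))"
  have cg: "continuous_on {a/m..} g" unfolding g_def
    by (intro continuous_intros continuous_on_compose2[OF cf]) (use m in \<open>auto simp: field_simps\<close>)
  have bg: "norm (g x) \<le> (m * B) * exp (- (c * m) * x)" if "a/m \<le> x" for x
  proof -
    have "a \<le> m * x" using that m by (simp add: field_simps)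
    then show ?thesis unfolding g_def using bd[of "m * x"] m by (simp add: mult_left_mono mult_ac)
  qed
  have eq: "integral {a/m..b} g = integral {a..m * b} f" if "a/m \<le> b" for b
  proof -
    have img: "(\<lambda>x. x / m) ` {a..m * b} = {a/m..b}"
    proof
      show "(\<lambda>x. x / m) ` {a..m * b} \<subseteq> {a/m..b}" using m by (auto simp: field_simps)
      show "{a/m..b} \<subseteq> (\<lambda>x. x / m) ` {a..m * b}"
      proof
        fix y assume "y \<in> {a/m..b}"
        then have "y = (m * y) / m" "m * y \<in> {a..m*b}" using m by (auto simp: field_simps)
        then show "y \<in> (\<lambda>x. x / m) ` {a..m * b}" by blast
      qed
    qed
    have "integral {a/m..b} (\<lambda>x. f (m * x)) = (1 / \<bar>m\<bar>) *\<^sub>R integral {a..m * b} f"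
      using integral_stretch_real[of m a "m * b" f] m unfolding img by simp
    then show ?thesis unfolding g_def using m by simp
  qed
  have l1: "((\<lambda>b. integral {a/m..b} g) \<longlongrightarrow> integral {a/m..} g) at_top"
    by (rule ray_lim[OF cg _ bg]) (use c m in auto)
  have l2: "((\<lambda>b. integral {a..b} f) \<longlongrightarrow> integral {a..} f) at_top"
    by (rule ray_lim[OF cf c bd])
  have fl: "filterlim (\<lambda>b. m * b) at_top at_top" using m by real_asymp
  have l3: "((\<lambda>b. integral {a..m * b} f) \<longlongrightarrow> integral {a..} f) at_top"
    using filterlim_compose[OF l2 fl] by simp
  have l4: "((\<lambda>b. integral {a/m..b} g) \<longlongrightarrow> integral {a..} f) at_top"
  proof (rule Lim_transform_eventually[OF l3])
    show "\<forall>\<^sub>F b in at_top. integral {a..m*b} f = integral {a/m..b} g"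
      using eventually_ge_at_top[of "a/m"] by eventually_elim (simp add: eq)
  qed
  show ?thesis using tendsto_unique[OF _ l4 l1] g_def by simp
qed




definition Jc :: "(complex \<Rightarrow> 'b::banach \<Rightarrow> 'b) \<Rightarrow> real \<Rightarrow> (complex \<Rightarrow> 'b) \<Rightarrow> 'b" where
  "Jc sc th F = - integral {1..} (\<lambda>r. sc (cis (-th)) (F (complex_of_real r * cis (-th))))
     + integral {-th..th} (\<lambda>s. sc (\<i> * cis s) (F (cis s)))
     + integral {1..} (\<lambda>r. sc (cis th) (F (complex_of_real r * cis th)))"

definition "Mb th = 2 * (exp (cos th) / (- cos th)) + exp 1 * (2 * th)"

lemma cs_mult: "complex_scaling ((*) :: complex \<Rightarrow> complex \<Rightarrow> complex)"
  unfolding complex_scaling_def by (auto simp: algebra_simps norm_mult scaleR_conv_of_real)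

locale jloc =
  fixes sc :: "complex \<Rightarrow> 'b::banach \<Rightarrow> 'b" and th :: real
  assumes cs: "complex_scaling sc" and thg: "pi / 2 < th" and thl: "th < pi"
begin

lemma bb: "bounded_bilinear sc" using cs by (rule cs_bb)
lemma sc_norm: "norm (sc c x) = cmod c * norm x"
  using cs unfolding complex_scaling_def by auto
lemmas sc_diff_right = bounded_bilinear.diff_right[OF bb]
lemmas sc_add_left = bounded_bilinear.add_left[OF bb]
lemmas sc_minus_left = bounded_bilinear.minus_left[OF bb]

lemma cos_neg: "cos th < 0"
  using thg thl by (intro cos_lt_zero_pi) auto  

lemma th_pos: "0 < th" using thg pi_gt_zero by linarith

lemma ray_in_Gam: "1 \<le> r \<Longrightarrow> complex_of_real r * cis th \<in> GamS th"
  "1 \<le> r \<Longrightarrow> complex_of_real r * cis (-th) \<in> GamS th"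
  unfolding GamS_def by auto

lemma arc_in_Gam: "-th \<le> s \<Longrightarrow> s \<le> th \<Longrightarrow> cis s \<in> GamS th"
  unfolding GamS_def by auto

lemma ray_piece:
  assumes cF: "continuous_on (GamS th) F" and bF: "\<And>\<mu>. \<mu> \<in> GamS th \<Longrightarrow> norm (F \<mu>) \<le> B * exp (Re \<mu>)"
    and ph: "ph = th \<or> ph = -th"
  shows "(\<lambda>r. sc (cis ph) (F (complex_of_real r * cis ph))) integrable_on {1..}"
    "norm (integral {1..} (\<lambda>r. sc (cis ph) (F (complex_of_real r * cis ph)))) \<le> B * (exp (cos th) / (- cos th))"
proof -
  have inG: "complex_of_real r * cis ph \<in> GamS th" if "1 \<le> r" for r
    using ph ray_in_Gam that by auto
  have cont: "continuous_on {1..} (\<lambda>r. sc (cis ph) (F (complex_of_real r * cis ph)))"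
    by (intro bounded_bilinear.continuous_on[OF bb] continuous_on_const continuous_on_compose2[OF cF])
       (auto intro!: continuous_intros inG)
  have bd: "norm (sc (cis ph) (F (complex_of_real r * cis ph))) \<le> B * exp (- (- cos th) * r)" if "1 \<le> r" for r
  proof -
    have "cos ph = cos th" using ph by auto
    then show ?thesis using bF[OF inG[OF that]] by (simp add: sc_norm mult.commute)
  qed
  have c: "0 < - cos th" using cos_neg by simp
  show "(\<lambda>r. sc (cis ph) (F (complex_of_real r * cis ph))) integrable_on {1..}"
    by (rule ray_int(1)[OF cont c bd])
  have "norm (integral {1..} (\<lambda>r. sc (cis ph) (F (complex_of_real r * cis ph)))) \<le> B * exp (- (- cos th) * 1) / (- cos th)"
    by (rule ray_int(2)[OF cont c bd])
  then show "norm (integral {1..} (\<lambda>r. sc (cis ph) (F (complex_of_real r * cis ph)))) \<le> B * (exp (cos th) / (- cos th))"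
    by simp
qed

lemma arc_piece:
  assumes cF: "continuous_on (GamS th) F" and bF: "\<And>\<mu>. \<mu> \<in> GamS th \<Longrightarrow> norm (F \<mu>) \<le> B * exp (Re \<mu>)"
  shows "(\<lambda>s. sc (\<i> * cis s) (F (cis s))) integrable_on {-th..th}"
    "norm (integral {-th..th} (\<lambda>s. sc (\<i> * cis s) (F (cis s)))) \<le> B * exp 1 * (2 * th)"
proof -
  have cont: "continuous_on {-th..th} (\<lambda>s. sc (\<i> * cis s) (F (cis s)))"
    by (intro bounded_bilinear.continuous_on[OF bb] continuous_on_compose2[OF cF])
       (auto intro!: continuous_intros arc_in_Gam)
  show "(\<lambda>s. sc (\<i> * cis s) (F (cis s))) integrable_on {-th..th}"
    by (rule integrable_continuous_interval[OF cont])
  have B0: "0 \<le> B" using bF[OF arc_in_Gam[of 0]] th_pos norm_ge_zero[of "F (cis 0)"]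
    by (smt (verit, best) exp_gt_zero zero_le_mult_iff)
  have "norm (integral {-th..th} (\<lambda>s. sc (\<i> * cis s) (F (cis s)))) \<le> B * exp 1 * (th - - th)"
  proof (rule integral_bound)
    show "- th \<le> th" using th_pos by simp
    show "continuous_on {- th..th} (\<lambda>s. sc (\<i> * cis s) (F (cis s)))" by (rule cont)
    fix s assume "s \<in> {-th..th}"
    then have "norm (F (cis s)) \<le> B * exp (cos s)" using bF[OF arc_in_Gam] by auto
    also have "\<dots> \<le> B * exp 1" using B0 by (intro mult_left_mono) auto
    finally show "norm (sc (\<i> * cis s) (F (cis s))) \<le> B * exp 1" by (simp add: sc_norm norm_mult)
  qed
  then show "norm (integral {-th..th} (\<lambda>s. sc (\<i> * cis s) (F (cis s)))) \<le> B * exp 1 * (2 * th)" by simp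
qed

lemma J_bound:
  assumes cF: "continuous_on (GamS th) F" and bF: "\<And>\<mu>. \<mu> \<in> GamS th \<Longrightarrow> norm (F \<mu>) \<le> B * exp (Re \<mu>)"
  shows "norm (Jc sc th F) \<le> B * Mb th"
proof -
  note r1 = ray_piece(2)[OF cF bF, of "-th"] and r2 = ray_piece(2)[OF cF bF, of th]
    and a = arc_piece(2)[OF cF bF]
  define X where "X = exp (cos th) / (- cos th)"
  have "norm (Jc sc th F) \<le> B * X + B * exp 1 * (2 * th) + B * X"
    unfolding Jc_def using r1[folded X_def] r2[folded X_def] a
    by (smt (verit, ccfv_SIG) norm_minus_cancel norm_triangle_ineq)
  then show ?thesis unfolding Mb_def X_def[symmetric] by (simp add: algebra_simps)
qed

lemma J_diff:
  assumes cF: "continuous_on (GamS th) F" and bF: "\<And>\<mu>. \<mu> \<in> GamS th \<Longrightarrow> norm (F \<mu>) \<le> B * exp (Re \<mu>)"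
    and cG: "continuous_on (GamS th) G" and bG: "\<And>\<mu>. \<mu> \<in> GamS th \<Longrightarrow> norm (G \<mu>) \<le> B' * exp (Re \<mu>)"
  shows "Jc sc th F - Jc sc th G = Jc sc th (\<lambda>\<mu>. F \<mu> - G \<mu>)"
proof -
  note i1 = ray_piece(1)[OF cF bF, of "-th"] ray_piece(1)[OF cG bG, of "-th"]
  note i2 = ray_piece(1)[OF cF bF, of "th"] ray_piece(1)[OF cG bG, of "th"]
  note i3 = arc_piece(1)[OF cF bF] arc_piece(1)[OF cG bG]
  show ?thesis unfolding Jc_def sc_diff_right
    using integral_diff[OF i1] integral_diff[OF i2] integral_diff[OF i3]
    by (simp add: algebra_simps)
qed

lemma J_const:
  assumes cF: "continuous_on (GamS th) \<phi>" and bF: "\<And>\<mu>. \<mu> \<in> GamS th \<Longrightarrow> cmod (\<phi> \<mu>) \<le> B * exp (Re \<mu>)"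
  shows "Jc sc th (\<lambda>\<mu>. sc (\<phi> \<mu>) d) = sc (Jc (*) th \<phi>) d"
proof -
  interpret cj: jloc "(*)" th using cs_mult thg thl by unfold_locales
  have bl: "bounded_linear (\<lambda>z. sc z d)" by (rule bounded_bilinear.bounded_linear_left[OF bb])
  have m: "sc c (sc z d) = sc (c * z) d" for c z
    using cs unfolding complex_scaling_def by auto
  have L: "integral S (\<lambda>x. sc (k x) (sc (\<phi> (p x)) d)) = sc (integral S (\<lambda>x. k x * \<phi> (p x))) d"
    if "(\<lambda>x. k x * \<phi> (p x)) integrable_on S" for S k p
  proof -
    have "integral S ((\<lambda>z. sc z d) \<circ> (\<lambda>x. k x * \<phi> (p x))) = sc (integral S (\<lambda>x. k x * \<phi> (p x))) d"
      by (rule integral_linear[OF that bl])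
    then show ?thesis by (simp add: o_def m)
  qed
  note i1 = cj.ray_piece(1)[OF cF bF, of "-th"] and i2 = cj.ray_piece(1)[OF cF bF, of "th"]
    and i3 = cj.arc_piece(1)[OF cF bF]
  have e1: "integral {1..} (\<lambda>r. sc (cis (-th)) (sc (\<phi> (complex_of_real r * cis (-th))) d))
     = sc (integral {1..} (\<lambda>r. cis (-th) * \<phi> (complex_of_real r * cis (-th)))) d"
    using integral_linear[OF i1 bl] by (simp add: o_def m)
  have e2: "integral {1..} (\<lambda>r. sc (cis th) (sc (\<phi> (complex_of_real r * cis th)) d))
     = sc (integral {1..} (\<lambda>r. cis th * \<phi> (complex_of_real r * cis th))) d"
    using integral_linear[OF i2 bl] by (simp add: o_def m)
  have e3: "integral {-th..th} (\<lambda>s. sc (\<i> * cis s) (sc (\<phi> (cis s)) d))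
     = sc (integral {-th..th} (\<lambda>s. \<i> * cis s * \<phi> (cis s))) d"
    using integral_linear[OF i3 bl] by (simp add: o_def m)
  show ?thesis unfolding Jc_def e1 e2 e3
    by (simp only: sc_add_left sc_minus_left)
qed

end




definition gfun :: "complex \<Rightarrow> complex" where
  "gfun z = (if z = 0 then 1 else (exp z - 1) / z)"

lemma gfun_deriv: "z \<noteq> 0 \<Longrightarrow> gfun field_differentiable at z"
proof -
  assume z: "z \<noteq> 0"
  have "((\<lambda>z. (exp z - 1) / z) has_field_derivative ((exp z * z - (exp z - 1)) / z^2)) (at z)"
    using z by (auto intro!: derivative_eq_intros simp: power2_eq_square)
  then have "(gfun has_field_derivative ((exp z * z - (exp z - 1)) / z^2)) (at z)"
    by (rule has_field_derivative_transform_within_open[of _ _ z "-{0}"]) (use z in \<open>auto simp: gfun_def\<close>)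
  then show ?thesis unfolding field_differentiable_def by blast
qed

lemma gfun_cont: "continuous_on UNIV gfun"
proof -
  have "isCont gfun z" for z
  proof (cases "z = 0")
    case True
    have "(exp has_field_derivative exp 0) (at 0)" by (rule DERIV_exp)
    then have "((\<lambda>y. (exp y - exp 0) / (y - 0)) \<longlongrightarrow> exp 0) (at (0::complex))"
      unfolding has_field_derivative_iff by simp
    then have "((\<lambda>y. (exp y - 1) / y) \<longlongrightarrow> 1) (at (0::complex))" by simp
    then have "(gfun \<longlongrightarrow> 1) (at 0)"
      by (rule Lim_transform_eventually) (simp add: eventually_at_filter gfun_def)
    then have "(gfun \<longlongrightarrow> gfun 0) (at 0)" by (simp add: gfun_def)
    then show ?thesis using True isCont_def by blast
  next
    case False
    show ?thesis using gfun_deriv[OF False] by (rule field_differentiable_imp_continuous_at)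
  qed
  then show ?thesis by (simp add: continuous_at_imp_continuous_on)
qed

lemma exists_P: "\<exists>P. \<forall>x. (P has_field_derivative gfun x) (at x)"
proof -
  obtain P where "\<And>x. x \<in> UNIV \<Longrightarrow> (P has_field_derivative gfun x) (at x within UNIV)"
    by (rule holomorphic_convex_primitive[of UNIV "{0}" gfun])
       (auto simp: gfun_cont gfun_deriv)
  then show ?thesis by auto
qed

definition "Pf = (SOME P. \<forall>x. (P has_field_derivative gfun x) (at x))"

lemma Pf_deriv: "(Pf has_field_derivative gfun x) (at x)"
  using someI_ex[OF exists_P] unfolding Pf_def by blast

lemma Pf_ray: "((\<lambda>r. Pf (complex_of_real r * w)) has_vector_derivative (gfun (complex_of_real r * w) * w)) (at r within S)"
proof -
  have "((\<lambda>z. Pf (z * w)) has_field_derivative (gfun (complex_of_real r * w) * w)) (at (complex_of_real r))"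
    by (rule DERIV_chain2[OF Pf_deriv]) (auto intro!: derivative_eq_intros)
  then show ?thesis by (rule has_vector_derivative_real_field)
qed

lemma Pf_arc: "((\<lambda>s. Pf (complex_of_real b * cis s)) has_vector_derivative
     (gfun (complex_of_real b * cis s) * (complex_of_real b * (\<i> * cis s)))) (at s within S)"
proof -
  have "((\<lambda>z. Pf (complex_of_real b * exp (\<i> * z))) has_field_derivative
      (gfun (complex_of_real b * exp (\<i> * complex_of_real s)) * (complex_of_real b * (exp (\<i> * complex_of_real s) * \<i>)))) (at (complex_of_real s))"
    by (rule DERIV_chain2[OF Pf_deriv]) (auto intro!: derivative_eq_intros)
  from has_vector_derivative_real_field[OF this, of S]
  show ?thesis by (simp add: cis_conv_exp mult_ac)
qed


lemma Jc_E:
  fixes th :: real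
  assumes thg: "pi / 2 < th" and thl: "th < pi"
  shows "Jc (*) th (\<lambda>z. exp z / z) = 2 * complex_of_real pi * \<i>"
proof -
  have cn: "cos th < 0" using thg thl by (intro cos_lt_zero_pi) auto
  have thp: "0 < th" using thg pi_gt_zero by linarith
  define c where "c = - cos th"
  have c: "0 < c" using cn c_def by simp
  define fp where "fp = (\<lambda>r::real. cis th * (exp (complex_of_real r * cis th) / (complex_of_real r * cis th)))"
  define fm where "fm = (\<lambda>r::real. cis (-th) * (exp (complex_of_real r * cis (-th)) / (complex_of_real r * cis (-th))))"
  define Q where "Q = (\<lambda>x::real. Pf (complex_of_real x * cis th) - Pf (complex_of_real x * cis (-th)))"
  define BA where "BA = (\<lambda>b::real. integral {th..2*pi-th} (\<lambda>s. \<i> * exp (complex_of_real b * cis s)))"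
  have cfp: "continuous_on {1..} fp" unfolding fp_def by (intro continuous_intros) auto
  have cfm: "continuous_on {1..} fm" unfolding fm_def by (intro continuous_intros) auto
  have bfp: "norm (fp r) \<le> 1 * exp (- c * r)" if "1 \<le> r" for r
  proof -
    have "norm (fp r) = exp (r * cos th) / r" using that unfolding fp_def by (simp add: norm_mult norm_divide)
    also have "\<dots> \<le> exp (r * cos th)" using that by (simp add: divide_le_eq mult_le_cancel_left1)
    finally show ?thesis by (simp add: c_def mult.commute)
  qed
  have bfm: "norm (fm r) \<le> 1 * exp (- c * r)" if "1 \<le> r" for r
  proof -
    have "norm (fm r) = exp (r * cos th) / r" using that unfolding fm_def by (simp add: norm_mult norm_divide)
    also have "\<dots> \<le> exp (r * cos th)" using that by (simp add: divide_le_eq mult_le_cancel_left1)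
    finally show ?thesis by (simp add: c_def mult.commute)
  qed
  have geq: "gfun (complex_of_real r * w) * w = (exp (complex_of_real r * w) - 1) / complex_of_real r"
    if "r > 0" "w \<noteq> 0" for r w using that by (simp add: gfun_def)
  have diffeq: "fp r - fm r = gfun (complex_of_real r * cis th) * cis th - gfun (complex_of_real r * cis (-th)) * cis (-th)"
    if "r > 0" for r
    unfolding geq[OF that cis_neq_zero] unfolding fp_def fm_def using that
    by (simp add: field_simps)
  have ftc: "((\<lambda>r. fp r - fm r) has_integral (Q b - Q 1)) {1..b}" if "1 \<le> b" for b
  proof (rule fundamental_theorem_of_calculus[OF that])
    fix x assume x: "x \<in> {1..b}"
    have "(Q has_vector_derivative (gfun (complex_of_real x * cis th) * cis th - gfun (complex_of_real x * cis (-th)) * cis (-th))) (at x within {1..b})"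
      unfolding Q_def by (intro has_vector_derivative_diff Pf_ray)
    then show "(Q has_vector_derivative fp x - fm x) (at x within {1..b})"
      using diffeq[of x] x by simp
  qed
  have arc: "((\<lambda>s. \<i> * cis s * (exp (cis s) / cis s)) has_integral (Q 1 + 2 * complex_of_real th * \<i>)) {-th..th}"
  proof -
    define Ar where "Ar = (\<lambda>s::real. Pf (cis s) + \<i> * complex_of_real s)"
    have "((\<lambda>s. \<i> * cis s * (exp (cis s) / cis s)) has_integral (Ar th - Ar (-th))) {-th..th}"
    proof (rule fundamental_theorem_of_calculus)
      show "-th \<le> th" using thp by simp
      fix x assume x: "x \<in> {-th..th}"
      have "(Ar has_vector_derivative (gfun (cis x) * (\<i> * cis x) + \<i>)) (at x within {-th..th})"
        unfolding Ar_def using Pf_arc[of 1 x "{-th..th}"]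
        by (auto intro!: derivative_eq_intros)
      moreover have "gfun (cis x) * (\<i> * cis x) + \<i> = \<i> * cis x * (exp (cis x) / cis x)"
        by (simp add: gfun_def field_simps)
      ultimately show "(Ar has_vector_derivative \<i> * cis x * (exp (cis x) / cis x)) (at x within {-th..th})"
        by simp
    qed
    moreover have "Ar th - Ar (-th) = Q 1 + 2 * complex_of_real th * \<i>"
      unfolding Ar_def Q_def by simp
    ultimately show ?thesis by simp
  qed
  have big: "Q b = \<i> * complex_of_real (2 * pi - 2 * th) - BA b" if b1: "1 \<le> b" for b
  proof -
    define Ab where "Ab = (\<lambda>s::real. Pf (complex_of_real b * cis s) + \<i> * complex_of_real s)"
    have "((\<lambda>s. \<i> * exp (complex_of_real b * cis s)) has_integral (Ab (2*pi-th) - Ab th)) {th..2*pi-th}"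
    proof (rule fundamental_theorem_of_calculus)
      show "th \<le> 2*pi-th" using thl by simp
      fix x assume x: "x \<in> {th..2*pi-th}"
      have "(Ab has_vector_derivative (gfun (complex_of_real b * cis x) * (complex_of_real b * (\<i> * cis x)) + \<i>)) (at x within {th..2*pi-th})"
        unfolding Ab_def using Pf_arc[of b x "{th..2*pi-th}"]
        by (auto intro!: derivative_eq_intros)
      moreover have "gfun (complex_of_real b * cis x) * (complex_of_real b * (\<i> * cis x)) + \<i> = \<i> * exp (complex_of_real b * cis x)"
        using b1 by (simp add: gfun_def field_simps)
      ultimately show "(Ab has_vector_derivative \<i> * exp (complex_of_real b * cis x)) (at x within {th..2*pi-th})"
        by simp
    qed
    then have "BA b = Ab (2*pi-th) - Ab th" unfolding BA_def by (rule integral_unique)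
    moreover have "cis (2*pi-th) = cis (-th)" by (simp add: complex_eq_iff)
    ultimately show ?thesis unfolding Ab_def Q_def by (simp add: algebra_simps)
  qed
  have BAb: "norm (BA b) \<le> exp (- c * b) * (2*pi - th - th)" if b1: "1 \<le> b" for b
    unfolding BA_def
  proof (rule integral_bound)
    show "th \<le> 2*pi-th" using thl by simp
    show "continuous_on {th..2*pi-th} (\<lambda>s. \<i> * exp (complex_of_real b * cis s))"
      by (intro continuous_intros)
    fix s assume s: "s \<in> {th..2*pi-th}"
    have "cos s \<le> cos th"
    proof (cases "s \<le> pi")
      case True then show ?thesis using s thp by (intro cos_monotone_0_pi_le) auto
    next
      case False
      have "cos s = cos (2*pi - s)" by simp
      also have "\<dots> \<le> cos th" using s thp False by (intro cos_monotone_0_pi_le) auto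
      finally show ?thesis .
    qed
    then have "b * cos s \<le> b * cos th" using b1 by (intro mult_left_mono) auto
    then show "norm (\<i> * exp (complex_of_real b * cis s)) \<le> exp (- c * b)"
      by (simp add: norm_mult c_def mult.commute)
  qed
  have BA0: "(BA \<longlongrightarrow> 0) at_top"
  proof (rule Lim_null_comparison)
    show "\<forall>\<^sub>F b in at_top. norm (BA b) \<le> exp (- c * b) * (2*pi - th - th)"
      using eventually_ge_at_top[of 1] by eventually_elim (rule BAb)
    show "((\<lambda>b. exp (- c * b) * (2*pi - th - th)) \<longlongrightarrow> 0) at_top" using c by real_asymp
  qed
  have L1: "((\<lambda>b. integral {1..b} fp) \<longlongrightarrow> integral {1..} fp) at_top" by (rule ray_lim[OF cfp c bfp])
  have L2: "((\<lambda>b. integral {1..b} fm) \<longlongrightarrow> integral {1..} fm) at_top" by (rule ray_lim[OF cfm c bfm])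
  have L3: "((\<lambda>b. integral {1..b} fp - integral {1..b} fm) \<longlongrightarrow> integral {1..} fp - integral {1..} fm) at_top"
    by (intro tendsto_diff L1 L2)
  have L4: "((\<lambda>b. \<i> * complex_of_real (2 * pi - 2 * th) - BA b - Q 1) \<longlongrightarrow> \<i> * complex_of_real (2 * pi - 2 * th) - 0 - Q 1) at_top"
    by (intro tendsto_diff tendsto_const BA0)
  have L5: "((\<lambda>b. integral {1..b} fp - integral {1..b} fm) \<longlongrightarrow> \<i> * complex_of_real (2 * pi - 2 * th) - 0 - Q 1) at_top"
  proof (rule Lim_transform_eventually[OF L4])
    show "\<forall>\<^sub>F b in at_top. \<i> * complex_of_real (2 * pi - 2 * th) - BA b - Q 1 = integral {1..b} fp - integral {1..b} fm"
      using eventually_ge_at_top[of 1]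
    proof eventually_elim
      case (elim b)
      have i1: "fp integrable_on {1..b}" "fm integrable_on {1..b}"
        by (intro integrable_continuous_interval continuous_on_subset[OF cfp] continuous_on_subset[OF cfm]; auto)+
      have "integral {1..b} fp - integral {1..b} fm = integral {1..b} (\<lambda>r. fp r - fm r)"
        using integral_diff[OF i1] by simp
      also have "\<dots> = Q b - Q 1" using ftc[OF elim] by (simp add: integral_unique)
      finally show ?case using big[OF elim] by simp
    qed
  qed
  have rays: "integral {1..} fp - integral {1..} fm = \<i> * complex_of_real (2 * pi - 2 * th) - Q 1"
    using tendsto_unique[OF _ L3 L5] by simp
  have "Jc (*) th (\<lambda>z. exp z / z) = - integral {1..} fm + (Q 1 + 2 * complex_of_real th * \<i>) + integral {1..} fp"
    unfolding Jc_def fp_def fm_def using integral_unique[OF arc] by simp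
  also have "\<dots> = 2 * complex_of_real pi * \<i>" using rays by (simp add: algebra_simps)
  finally show ?thesis .
qed




context setting begin

sublocale jloc sc th using cs th_gt th_lt by unfold_locales

lemma R_cont: "continuous_on Sig (\<lambda>l. R l y)"
  unfolding continuous_on_def
proof
  fix l0 assume l0: "l0 \<in> Sig"
  have l0nz: "l0 \<noteq> 0" using l0 unfolding sector_def by auto
  have "((\<lambda>l. R l y - R l0 y) \<longlongrightarrow> 0) (at l0 within Sig)"
  proof (rule Lim_null_comparison)
    show "\<forall>\<^sub>F l in at l0 within Sig. norm (R l y - R l0 y) \<le> cmod (l0 - l) * (CC / cmod l * (CC / cmod l0 * norm y))"
      unfolding eventually_at_filter
    proof (intro always_eventually allI impI)
      fix l assume l: "l \<noteq> l0" "l \<in> Sig"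
      have "norm (R l y - R l0 y) = cmod (l0 - l) * norm (R l (R l0 y))"
        using res_identity[OF Sig_res[OF l(2)] Sig_res[OF l0]] by (simp add: sc_norm)
      also have "\<dots> \<le> cmod (l0 - l) * (CC / cmod l * (CC / cmod l0 * norm y))"
      proof (intro mult_left_mono)
        have "CC / cmod l * norm (R l0 y) \<le> CC / cmod l * (CC / cmod l0 * norm y)"
          using Rb[OF l0, of y] CC_nonneg by (intro mult_left_mono) auto
        then show "norm (R l (R l0 y)) \<le> CC / cmod l * (CC / cmod l0 * norm y)"
          using Rb[OF l(2), of "R l0 y"] by linarith
      qed auto
      finally show "norm (R l y - R l0 y) \<le> cmod (l0 - l) * (CC / cmod l * (CC / cmod l0 * norm y))" .
    qed
    have "((\<lambda>l. cmod (l0 - l) * (CC / cmod l * (CC / cmod l0 * norm y))) \<longlongrightarrow>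
          cmod (l0 - l0) * (CC / cmod l0 * (CC / cmod l0 * norm y))) (at l0 within Sig)"
      using l0nz by (intro tendsto_intros) auto
    then show "((\<lambda>l. cmod (l0 - l) * (CC / cmod l * (CC / cmod l0 * norm y))) \<longlongrightarrow> 0) (at l0 within Sig)"
      by simp
  qed
  then show "((\<lambda>l. R l y) \<longlongrightarrow> R l0 y) (at l0 within Sig)" by (rule LIM_zero_cancel)
qed

lemma Fs_cont: assumes s: "0 < s" shows "continuous_on Gam (Fs s a)"
proof -
  have Gsub: "Gam \<subseteq> {z. Re z \<ge> 0 \<or> Im z \<noteq> 0}" using Gam_props(4) by blast
  have c1: "continuous_on Gam (\<lambda>\<mu>. exp \<mu> * \<mu> powr (complex_of_real al - 1) * complex_of_real s)"
    by (intro continuous_intros continuous_on_powr_complex Gsub) (auto dest: Gam_props(1))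
  have c2: "continuous_on Gam (\<lambda>\<mu>. complex_of_real s * \<mu> powr complex_of_real al)"
    by (intro continuous_intros continuous_on_powr_complex Gsub) (auto dest: Gam_props(1))
  have c3: "continuous_on Gam (\<lambda>\<mu>. R (complex_of_real s * \<mu> powr complex_of_real al) a)"
    by (rule continuous_on_compose2[OF R_cont c2]) (use Fs_nu(1)[OF _ s] in auto)
  show ?thesis unfolding Fs_def[abs_def]
    by (rule bounded_bilinear.continuous_on[OF bb c1 c3])
qed


lemma Gint_eq:
  assumes t: "0 < t" and l: "l \<noteq> 0"
  shows "G_integrand sc D A al t a l = sc (complex_of_real t) (Fs (t powr -al) a (complex_of_real t * l))"
proof -
  have pw: "(complex_of_real t * l) powr w = complex_of_real t powr w * l powr w" for w
    using t by (intro powr_times_real_left) auto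
  have p1: "complex_of_real t powr complex_of_real al = complex_of_real (t powr al)"
    using t by (simp add: powr_of_real)
  have p2: "complex_of_real t powr (complex_of_real al - 1) = complex_of_real (t powr al / t)"
  proof -
    have "complex_of_real t powr (complex_of_real al - 1) = complex_of_real t powr complex_of_real (al - 1)" by simp
    also have "\<dots> = complex_of_real (t powr (al - 1))" using t by (simp add: powr_of_real del: of_real_diff)
    also have "t powr (al - 1) = t powr al / t" using t by (simp add: powr_diff)
    finally show ?thesis .
  qed
  have tp: "0 < t powr al" using t by simp
  have inv: "t powr -al = 1 / t powr al" using t by (simp add: powr_minus_divide)
  have e1: "complex_of_real (t powr -al) * (complex_of_real (t powr al) * l powr complex_of_real al) = l powr complex_of_real al"
    unfolding inv using tp by (simp add: field_simps)
  have e2: "complex_of_real t * (exp (complex_of_real t * l) * (complex_of_real (t powr al / t) * l powr (complex_of_real al - 1))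
      * complex_of_real (t powr -al)) = exp (l * complex_of_real t) * l powr (complex_of_real al - 1)"
    unfolding inv using tp t by (simp add: field_simps)
  show ?thesis unfolding Fs_def G_integrand_def pw p1 p2 e1 sc_mult e2 ..
qed


lemma ray_H:
  assumes s: "0 < s" and ph: "ph = th \<or> ph = -th"
  shows "continuous_on {1..} (\<lambda>r. sc (cis ph) (Fs s a (complex_of_real r * cis ph)))"
    "\<And>r. 1 \<le> r \<Longrightarrow> norm (sc (cis ph) (Fs s a (complex_of_real r * cis ph))) \<le> (CC * norm a) * exp (- (- cos th) * r)"
proof -
  have inG: "complex_of_real r * cis ph \<in> Gam" if "1 \<le> r" for r
    using ph ray_in_Gam that by auto
  show "continuous_on {1..} (\<lambda>r. sc (cis ph) (Fs s a (complex_of_real r * cis ph)))"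
    by (intro bounded_bilinear.continuous_on[OF bb] continuous_on_const continuous_on_compose2[OF Fs_cont[OF s]])
       (auto intro!: continuous_intros inG)
  fix r :: real assume r: "1 \<le> r"
  have "cos ph = cos th" using ph by auto
  then show "norm (sc (cis ph) (Fs s a (complex_of_real r * cis ph))) \<le> (CC * norm a) * exp (- (- cos th) * r)"
    using Fs_bound[OF inG[OF r] s, of a] by (simp add: sc_norm mult.commute mult.left_commute)
qed

lemma G_rep:
  assumes t: "0 < t"
  shows "G_op sc D A al th t a = sc (1 / (2 * complex_of_real pi * \<i>)) (Jc sc th (Fs (t powr -al) a))"
proof -
  define s where "s = t powr -al"
  have s: "0 < s" using t s_def by simp
  have c: "0 < - cos th" using cos_neg by simp
  have ray: "integral {1/t..} (\<lambda>r. sc (cis ph) (G_integrand sc D A al t a (complex_of_real r * cis ph)))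
      = integral {1..} (\<lambda>r. sc (cis ph) (Fs s a (complex_of_real r * cis ph)))"
    if ph: "ph = th \<or> ph = -th" for ph
  proof -
    have "integral {1..} (\<lambda>r. sc (cis ph) (Fs s a (complex_of_real r * cis ph)))
       = integral {1/t..} (\<lambda>x. t *\<^sub>R sc (cis ph) (Fs s a (complex_of_real (t * x) * cis ph)))"
      by (rule ray_subst[OF ray_H(1)[OF s ph] c t ray_H(2)[OF s ph]])
    also have "\<dots> = integral {1/t..} (\<lambda>r. sc (cis ph) (G_integrand sc D A al t a (complex_of_real r * cis ph)))"
    proof (rule integral_cong)
      fix x assume x: "x \<in> {1/t..}"
      then have xp: "x > 0" using t by (auto intro: less_le_trans[of 0 "1/t"])
      have "G_integrand sc D A al t a (complex_of_real x * cis ph) =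
          sc (complex_of_real t) (Fs s a (complex_of_real (t * x) * cis ph))"
        unfolding s_def using Gint_eq[OF t, of "complex_of_real x * cis ph" a] xp by (simp add: mult.assoc)
      then show "t *\<^sub>R sc (cis ph) (Fs s a (complex_of_real (t * x) * cis ph)) =
          sc (cis ph) (G_integrand sc D A al t a (complex_of_real x * cis ph))"
        by (simp add: sc_mult sc_of_real[symmetric] mult.commute)
    qed
    finally show ?thesis by simp
  qed
  have arc: "integral {-th..th} (\<lambda>u. sc (\<i> * complex_of_real (1 / t) * cis u)
        (G_integrand sc D A al t a (complex_of_real (1 / t) * cis u)))
      = integral {-th..th} (\<lambda>u. sc (\<i> * cis u) (Fs s a (cis u)))"
  proof (rule integral_cong)
    fix u :: real
    have "G_integrand sc D A al t a (complex_of_real (1 / t) * cis u) = sc (complex_of_real t) (Fs s a (cis u))"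
      unfolding s_def using Gint_eq[OF t, of "complex_of_real (1 / t) * cis u" a] t by simp
    then show "sc (\<i> * complex_of_real (1 / t) * cis u) (G_integrand sc D A al t a (complex_of_real (1 / t) * cis u))
       = sc (\<i> * cis u) (Fs s a (cis u))"
      using t by (simp add: sc_mult)
  qed
  show ?thesis unfolding G_op_def Jc_def using t ray[of th] ray[of "-th"] arc s_def by simp
qed

end



context setting begin

abbreviation "kk \<equiv> 1 / (2 * complex_of_real pi * \<i>)"

lemma kk_norm: "cmod kk = 1 / (2 * pi)"
  by (simp add: norm_divide norm_mult)

lemma Mb_pos: "0 \<le> Mb th"
proof -
  have "0 \<le> exp (cos th) / (- cos th)" using cos_neg by (intro divide_nonneg_pos) auto
  moreover have "0 \<le> exp 1 * (2 * th)" using th_pos by simp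
  ultimately show ?thesis unfolding Mb_def by linarith
qed

lemma Fs_bound': "0 < s \<Longrightarrow> \<mu> \<in> Gam \<Longrightarrow> norm (Fs s a \<mu>) \<le> (CC * norm a) * exp (Re \<mu>)"
  using Fs_bound[of \<mu> s a] by (simp add: mult_ac)

lemma G_diff_bound:
  assumes s: "0 < s" and s': "0 < s'"
  shows "norm (sc kk (Jc sc th (Fs s' a)) - sc kk (Jc sc th (Fs s a)))
     \<le> cmod kk * ((\<bar>s - s'\<bar> * ((CC + CC^2) * norm a) / s) * Mb th)"
proof -
  have e: "Jc sc th (Fs s' a) - Jc sc th (Fs s a) = Jc sc th (\<lambda>\<mu>. Fs s' a \<mu> - Fs s a \<mu>)"
    by (rule J_diff[OF Fs_cont[OF s'] Fs_bound'[OF s'] Fs_cont[OF s] Fs_bound'[OF s]])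
  have b: "norm (Jc sc th (\<lambda>\<mu>. Fs s' a \<mu> - Fs s a \<mu>)) \<le> (\<bar>s - s'\<bar> * ((CC + CC^2) * norm a) / s) * Mb th"
  proof (rule J_bound)
    show "continuous_on Gam (\<lambda>\<mu>. Fs s' a \<mu> - Fs s a \<mu>)"
      by (intro continuous_on_diff Fs_cont s s')
    fix \<mu> assume mu: "\<mu> \<in> Gam"
    show "norm (Fs s' a \<mu> - Fs s a \<mu>) \<le> (\<bar>s - s'\<bar> * ((CC + CC^2) * norm a) / s) * exp (Re \<mu>)"
      using Fs_lip[OF mu s s', of a] by (simp add: norm_minus_commute mult.commute)
  qed
  have "cmod kk * norm (Jc sc th (\<lambda>\<mu>. Fs s' a \<mu> - Fs s a \<mu>)) \<le> cmod kk * ((\<bar>s - s'\<bar> * ((CC + CC^2) * norm a) / s) * Mb th)"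
    by (rule mult_left_mono[OF b norm_ge_zero])
  then show ?thesis by (simp only: sc_diff_right[symmetric] sc_norm e)
qed

lemma cont_pos:
  assumes t: "0 < t"
  shows "((\<lambda>t'. norm (G_op sc D A al th t' a - G_op sc D A al th t a)) \<longlongrightarrow> 0) (at t within S)"
proof (rule Lim_null_comparison)
  define s where "s = t powr -al"
  have s: "0 < s" using t s_def by simp
  let ?b = "\<lambda>t'. cmod kk * ((\<bar>s - t' powr -al\<bar> * ((CC + CC^2) * norm a) / s) * Mb th)"
  have ev: "\<forall>\<^sub>F t' in at t within S. 0 < t'"
    using order_tendstoD(1)[OF tendsto_ident_at t] .
  then show "\<forall>\<^sub>F t' in at t within S. norm (norm (G_op sc D A al th t' a - G_op sc D A al th t a)) \<le> ?b t'"
  proof eventually_elim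
    case (elim t')
    show ?case unfolding G_rep[OF t] G_rep[OF elim] s_def[symmetric]
      using G_diff_bound[OF s, of "t' powr -al" a] elim by simp
  qed
  have "((\<lambda>t'. t' powr -al) \<longlongrightarrow> t powr -al) (at t within S)"
    using t by (intro tendsto_intros) auto
  then have "(?b \<longlongrightarrow> cmod kk * ((\<bar>s - t powr -al\<bar> * ((CC + CC^2) * norm a) / s) * Mb th)) (at t within S)"
    using t s by (intro tendsto_intros) auto
  then show "(?b \<longlongrightarrow> 0) (at t within S)" unfolding s_def by simp
qed


lemma E_cont: "continuous_on Gam (\<lambda>\<mu>. exp \<mu> / \<mu>)"
  by (intro continuous_intros) (auto dest: Gam_props(1))

lemma E_bound: "\<mu> \<in> Gam \<Longrightarrow> cmod (exp \<mu> / \<mu>) \<le> 1 * exp (Re \<mu>)"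
proof -
  assume mu: "\<mu> \<in> Gam"
  have "cmod (exp \<mu> / \<mu>) = exp (Re \<mu>) / cmod \<mu>" by (simp add: norm_divide)
  also have "\<dots> \<le> exp (Re \<mu>) / 1" using Gam_props(2)[OF mu] by (intro divide_left_mono) auto
  finally show ?thesis by simp
qed

lemma Ed_cont: "continuous_on Gam (\<lambda>\<mu>. sc (exp \<mu> / \<mu>) d)"
  by (intro bounded_bilinear.continuous_on[OF bb] E_cont continuous_on_const)

lemma Ed_bound: "\<mu> \<in> Gam \<Longrightarrow> norm (sc (exp \<mu> / \<mu>) d) \<le> norm d * exp (Re \<mu>)"
  using E_bound[of \<mu>] by (simp add: sc_norm mult.commute mult_left_mono)

lemma d_rep: "sc kk (Jc sc th (\<lambda>\<mu>. sc (exp \<mu> / \<mu>) d)) = d"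
proof -
  have "Jc sc th (\<lambda>\<mu>. sc (exp \<mu> / \<mu>) d) = sc (Jc (*) th (\<lambda>\<mu>. exp \<mu> / \<mu>)) d"
    by (rule J_const[OF E_cont E_bound])
  also have "\<dots> = sc (2 * complex_of_real pi * \<i>) d" using Jc_E[OF th_gt th_lt] by simp
  finally show ?thesis by (simp add: sc_mult sc_one)
qed

lemma G_lin_bound:
  assumes t: "0 < t"
  shows "norm (G_op sc D A al th t a - G_op sc D A al th t d) \<le> cmod kk * (CC * Mb th) * norm (a - d)"
proof -
  define s where "s = t powr -al"
  have s: "0 < s" using t s_def by simp
  have e: "Jc sc th (Fs s a) - Jc sc th (Fs s d) = Jc sc th (\<lambda>\<mu>. Fs s a \<mu> - Fs s d \<mu>)"
    by (rule J_diff[OF Fs_cont[OF s] Fs_bound'[OF s] Fs_cont[OF s] Fs_bound'[OF s]])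
  have b: "norm (Jc sc th (\<lambda>\<mu>. Fs s a \<mu> - Fs s d \<mu>)) \<le> (CC * norm (a - d)) * Mb th"
  proof (rule J_bound)
    show "continuous_on Gam (\<lambda>\<mu>. Fs s a \<mu> - Fs s d \<mu>)"
      by (intro continuous_on_diff Fs_cont s)
    fix \<mu> assume mu: "\<mu> \<in> Gam"
    show "norm (Fs s a \<mu> - Fs s d \<mu>) \<le> (CC * norm (a - d)) * exp (Re \<mu>)"
      unfolding Fs_diff_a[OF mu s] by (rule Fs_bound'[OF s mu])
  qed
  have "cmod kk * norm (Jc sc th (\<lambda>\<mu>. Fs s a \<mu> - Fs s d \<mu>)) \<le> cmod kk * ((CC * norm (a - d)) * Mb th)"
    by (rule mult_left_mono[OF b norm_ge_zero])
  then have "norm (sc kk (Jc sc th (Fs s a)) - sc kk (Jc sc th (Fs s d))) \<le> cmod kk * ((CC * norm (a - d)) * Mb th)"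
    by (simp only: sc_diff_right[symmetric] sc_norm e)
  then show ?thesis unfolding G_rep[OF t] s_def[symmetric] by (simp add: mult_ac)
qed

lemma G_D_bound:
  assumes t: "0 < t" and d: "d \<in> D"
  shows "norm (G_op sc D A al th t d - d) \<le> cmod kk * (CC * norm (A d) * Mb th) * t powr al"
proof -
  define s where "s = t powr -al"
  have s: "0 < s" using t s_def by simp
  have e: "Jc sc th (Fs s d) - Jc sc th (\<lambda>\<mu>. sc (exp \<mu> / \<mu>) d) = Jc sc th (\<lambda>\<mu>. Fs s d \<mu> - sc (exp \<mu> / \<mu>) d)"
    by (rule J_diff[OF Fs_cont[OF s] Fs_bound'[OF s] Ed_cont Ed_bound])
  have b: "norm (Jc sc th (\<lambda>\<mu>. Fs s d \<mu> - sc (exp \<mu> / \<mu>) d)) \<le> (CC * norm (A d) / s) * Mb th"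
  proof (rule J_bound)
    show "continuous_on Gam (\<lambda>\<mu>. Fs s d \<mu> - sc (exp \<mu> / \<mu>) d)"
      by (intro continuous_on_diff Fs_cont s Ed_cont)
    fix \<mu> assume mu: "\<mu> \<in> Gam"
    show "norm (Fs s d \<mu> - sc (exp \<mu> / \<mu>) d) \<le> (CC * norm (A d) / s) * exp (Re \<mu>)"
      using Fs_D[OF mu s d] by (simp add: mult.commute)
  qed
  have "cmod kk * norm (Jc sc th (\<lambda>\<mu>. Fs s d \<mu> - sc (exp \<mu> / \<mu>) d)) \<le> cmod kk * ((CC * norm (A d) / s) * Mb th)"
    by (rule mult_left_mono[OF b norm_ge_zero])
  then have "norm (sc kk (Jc sc th (Fs s d)) - sc kk (Jc sc th (\<lambda>\<mu>. sc (exp \<mu> / \<mu>) d))) \<le> cmod kk * ((CC * norm (A d) / s) * Mb th)"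
    by (simp only: sc_diff_right[symmetric] sc_norm e)
  moreover have "cmod kk * ((CC * norm (A d) / s) * Mb th) = cmod kk * (CC * norm (A d) * Mb th) * t powr al"
    unfolding s_def using t by (simp add: powr_minus_divide)
  ultimately show ?thesis unfolding G_rep[OF t] s_def[symmetric] d_rep
    by simp
qed


lemma cont_zero:
  assumes T: "0 < T"
  shows "((\<lambda>t'. norm (G_op sc D A al th t' a - G_op sc D A al th 0 a)) \<longlongrightarrow> 0) (at 0 within {0..T})"
proof -
  have G0: "G_op sc D A al th 0 a = a" unfolding G_op_def by simp
  define K1 where "K1 = cmod kk * (CC * Mb th)"
  have K1: "0 \<le> K1" unfolding K1_def using CC_nonneg Mb_pos by simp
  have "\<forall>e>0. \<forall>\<^sub>F t' in at_right 0. dist (norm (G_op sc D A al th t' a - a)) 0 < e"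
  proof (intro allI impI)
    fix e :: real assume e: "0 < e"
    define \<delta> where "\<delta> = e / (2 * (K1 + 1))"
    have \<delta>: "0 < \<delta>" unfolding \<delta>_def using e K1 by simp
    have "a \<in> closure D" using dense unfolding densely_defined_def by simp
    then obtain d where d: "d \<in> D" "dist d a < \<delta>" using \<delta> unfolding closure_approachable by blast
    define K2 where "K2 = cmod kk * (CC * norm (A d) * Mb th)"
    have "((\<lambda>t'. K2 * t' powr al) \<longlongrightarrow> 0) (at_right 0)" using al0 by real_asymp
    then have ev1: "\<forall>\<^sub>F t' in at_right 0. K2 * t' powr al < e / 2"
      using e by (intro order_tendstoD(2)) auto
    have ev2: "\<forall>\<^sub>F t' in at_right (0::real). 0 < t'" by (rule eventually_at_right_less)
    show "\<forall>\<^sub>F t' in at_right 0. dist (norm (G_op sc D A al th t' a - a)) 0 < e"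
      using ev1 ev2
    proof eventually_elim
      case (elim t')
      have "G_op sc D A al th t' a - a = (G_op sc D A al th t' a - G_op sc D A al th t' d)
          + (G_op sc D A al th t' d - d) + (d - a)" by simp
      moreover have "norm ((G_op sc D A al th t' a - G_op sc D A al th t' d)
          + (G_op sc D A al th t' d - d) + (d - a)) \<le> norm (G_op sc D A al th t' a - G_op sc D A al th t' d)
          + norm (G_op sc D A al th t' d - d) + norm (d - a)"
        using norm_triangle_ineq[of "(G_op sc D A al th t' a - G_op sc D A al th t' d)
          + (G_op sc D A al th t' d - d)" "d - a"]
          norm_triangle_ineq[of "G_op sc D A al th t' a - G_op sc D A al th t' d" "G_op sc D A al th t' d - d"]
        by linarith
      ultimately have "norm (G_op sc D A al th t' a - a) \<le> norm (G_op sc D A al th t' a - G_op sc D A al th t' d)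
          + norm (G_op sc D A al th t' d - d) + norm (d - a)" by simp
      also have "\<dots> \<le> K1 * norm (a - d) + K2 * t' powr al + norm (a - d)"
        using G_lin_bound[OF elim(2), of a d] G_D_bound[OF elim(2) d(1)]
        unfolding K1_def K2_def by (simp add: norm_minus_commute)
      also have "\<dots> = (K1 + 1) * norm (a - d) + K2 * t' powr al" by (simp add: algebra_simps)
      also have "\<dots> < (K1 + 1) * \<delta> + e / 2"
        using d(2) K1 elim(1) by (intro add_less_le_mono mult_strict_left_mono) (auto simp: dist_norm norm_minus_commute)
      also have "\<dots> = e" unfolding \<delta>_def using K1 by (simp add: field_simps)
      finally show ?case by simp
    qed
  qed
  then have "((\<lambda>t'. norm (G_op sc D A al th t' a - a)) \<longlongrightarrow> 0) (at_right 0)"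
    by (simp add: tendsto_iff)
  then show ?thesis unfolding G0 at_within_Icc_at_right[OF T] .
qed

end

theorem proposition4p1:
  fixes sc :: "complex \<Rightarrow> 'a::banach \<Rightarrow> 'a"
    and D :: "'a set" and A :: "'a \<Rightarrow> 'a"
    and al th T :: real
  assumes "complex_scaling sc"
    and "0 < al" and "al < 1" and "0 < T"
    and "condition_A sc D A th"
    and "0 \<le> t" and "t \<le> T"
  shows "((\<lambda>t'. norm (G_op sc D A al th t' a - G_op sc D A al th t a)) \<longlongrightarrow> 0)
           (at t within {0..T})"
proof -
  interpret setting sc D A al th using assms by unfold_locales
  show ?thesis
  proof (cases "t = 0")
    case True then show ?thesis using cont_zero[OF assms(4)] by simp
  next
    case False then show ?thesis using cont_pos assms(6) by simp
  qed
qed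


end
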